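(* Let $\mathcal N=\{(M_2,N_1,N_3)\in\mathbb{C}^3\}$ carry the system \[ \dot M_2=N_3,\qquad \dot N_1=-M_2N_3,\qquad \dot N_3=M_2N_1 \] restricted to $N_1^2+N_3^2=1$. For $k\in(0,1]$ let $\Gamma_k$ be the complex phase curve given by $\frac12M_2^2+N_1=2k^2-1$, $N_1^2+N_3^2=1$ (for $k=1$ with the equilibrium $u=(M_2,N_1,N_3)=(0,1,0)$ removed). Let $\Omega$ be the closure of the set of real points of $\Gamma_1$ (i.e. of the union of the two real orbits homoclinic to the hyperbolic equilibrium $u$). Then for every complex neighbourhood $U\subset\mathcal N$ of $\Omega$ there exists $\epsilon>0$ such that for $0<1-k<\epsilon$ the fundamental group $\pi_1(\Gamma_k)$ is generated by loops lying in $U$.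
   Context: Here $\mathcal N$ is identified with the invariant submanifold $\{(\mathbf M,\mathbf N)\in\mathbb{C}^6: M_1=M_3=N_2=0,\ N_1^2+N_3^2=1\}$ of the complexified Euler–Poisson equations $\dot{\mathbf M}=[\mathbf M,\mathbf J\mathbf M]+[\mathbf N,\mathbf L]$, $\dot{\mathbf N}=[\mathbf N,\mathbf J\mathbf M]$ written in a body frame with $\mathbf L=[1,0,0]^T$ and second diagonal entry of $\mathbf J$ equal to $1$; the system above is the restriction to $\mathcal N$, with Hamiltonian $\frac12M_2^2+N_1$. For $k\in(0,1)$, $\Gamma_k$ is a smooth affine elliptic curve (a torus with two points removed). *)

theory Defs
  imports "HOL-Analysis.Analysis"
begin

type_synonym pt = "complex \<times> complex \<times> complex"  (* (M2, N1, N3) *)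

definition NN :: "pt set" where
  "NN = {(m, n1, n3). n1^2 + n3^2 = 1}"

definition Gamma :: "real \<Rightarrow> pt set" where
  "Gamma k = {(m, n1, n3). m^2 / 2 + n1 = of_real (2 * k^2 - 1) \<and> n1^2 + n3^2 = 1}
             - (if k = 1 then {(0, 1, 0)} else {})"

definition real_pt :: "pt \<Rightarrow> bool" where
  "real_pt p = (Im (fst p) = 0 \<and> Im (fst (snd p)) = 0 \<and> Im (snd (snd p)) = 0)"

definition Omega :: "pt set" where
  "Omega = closure {p \<in> Gamma 1. real_pt p}"

text \<open>pi_1(S) (at some base point x0 in S \<inter> U) is generated by loops lying in U:
  every loop in S at x0 is homotopic in S (rel endpoints) to a finite concatenation
  of loops at x0 lying in S \<inter> U (inverses are again such loops).\<close>
definition pi1_generated_in :: "pt set \<Rightarrow> pt set \<Rightarrow> bool" where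
  "pi1_generated_in S U =
    (\<exists>x0 \<in> S \<inter> U. \<forall>g. path g \<and> path_image g \<subseteq> S \<and> pathstart g = x0 \<and> pathfinish g = x0 \<longrightarrow>
       (\<exists>gs :: (real \<Rightarrow> pt) list.
          (\<forall>h \<in> set gs. path h \<and> path_image h \<subseteq> S \<inter> U \<and> pathstart h = x0 \<and> pathfinish h = x0) \<and>
          homotopic_paths S g (foldr (+++) gs (linepath x0 x0))))"

end

theory Submission
  imports Defs
begin

lemma alg1:
  fixes z z' b \<sigma> :: complex and c :: real
  assumes "z * z' = 1" "\<sigma> \<noteq> 0" "z \<noteq> b" "z \<noteq> cnj b" "b + cnj b = 2 * of_real c" "b * cnj b = 1"
  shows "(2 * of_real c - z - z') * ((\<sigma>*z - b)/(z - b)) * ((\<sigma>*z - cnj b)/(z - cnj b)) / \<sigma>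
         = 2 * of_real c - \<sigma>*z - z'/\<sigma>"
proof -
  have z0: "z \<noteq> 0" using assms(1) by auto
  have z': "z' = 1/z" using assms(1) z0 by (simp add: field_simps)
  have e1: "(z - b)*(z - cnj b) = z*z - (b + cnj b)*z + b * cnj b" by (simp add: algebra_simps)
  have e2: "(\<sigma>*z - b)*(\<sigma>*z - cnj b) = \<sigma>*z*(\<sigma>*z) - (b + cnj b)*(\<sigma>*z) + b * cnj b" by (simp add: algebra_simps)
  have nz: "(z - b)*(z - cnj b) \<noteq> 0" using assms by auto
  have "(2 * of_real c - z - z') = - ((z - b)*(z - cnj b)) / z"
    unfolding e1 assms(5,6) z' using z0 by (simp add: field_simps)
  moreover have "2 * of_real c - \<sigma>*z - z'/\<sigma> = - ((\<sigma>*z - b)*(\<sigma>*z - cnj b)) / (\<sigma>*z)"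
    unfolding e2 assms(5,6) z' using z0 assms(2) by (simp add: field_simps)
  moreover have "(2 * of_real c - z - z') * ((\<sigma>*z - b)/(z - b)) * ((\<sigma>*z - cnj b)/(z - cnj b)) / \<sigma>
     = (2 * of_real c - z - z') * ((\<sigma>*z - b)*(\<sigma>*z - cnj b)) / ((z - b)*(z - cnj b)) / \<sigma>"
    by (simp add: mult.assoc)
  moreover have "\<And>P Q. P \<noteq> 0 \<Longrightarrow> (- P / z) * Q / P / \<sigma> = - Q / (\<sigma> * z)"
    using z0 assms(2) by (simp add: field_simps)
  ultimately show ?thesis using nz by metis
qed

lemma re_pos:
  fixes z b :: complex and \<sigma> :: real
  assumes "0 < \<sigma>" "\<sigma> \<le> 1" "1 < \<sigma> * cmod z" "cmod b = 1"
  shows "0 < Re ((of_real \<sigma> * z - b)/(z - b))"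
proof -
  have le: "\<sigma> * cmod z \<le> cmod z" using assms(1,2) by (simp add: mult_left_le_one_le)
  have zb: "z \<noteq> b"
  proof
    assume "z = b" then have "\<sigma> * cmod z = \<sigma>" using assms(4) by simp
    with assms(2,3) show False by simp
  qed
  have A: "Re ((of_real \<sigma> * z - b) * cnj (z - b)) = \<sigma> * (cmod z)^2 - (\<sigma> + 1) * Re (z * cnj b) + 1"
  proof -
    have "(Re b)^2 + (Im b)^2 = 1" using assms(4) by (metis cmod_power2 power_one)
    moreover have "(cmod z)^2 = (Re z)^2 + (Im z)^2" by (simp add: cmod_power2)
    ultimately show ?thesis by (simp add: algebra_simps power2_eq_square)
  qed
  have B: "Re (z * cnj b) \<le> cmod z"
    using complex_Re_le_cmod[of "z * cnj b"] assms(4) by (simp add: norm_mult)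
  have B2: "(\<sigma> + 1) * Re (z * cnj b) \<le> (\<sigma> + 1) * cmod z"
    using B assms(1) by (intro mult_left_mono) auto
  have C: "\<sigma> * (cmod z)^2 - (\<sigma> + 1) * cmod z + 1 = (\<sigma> * cmod z - 1) * (cmod z - 1)"
    by (simp add: algebra_simps power2_eq_square)
  have D: "0 < (\<sigma> * cmod z - 1) * (cmod z - 1)"
    using assms(3) le by (intro mult_pos_pos) auto
  have E: "0 < Re ((of_real \<sigma> * z - b) * cnj (z - b))"
    using A B2 C D by linarith
  have F: "(of_real \<sigma> * z - b)/(z - b) = (of_real \<sigma> * z - b) * cnj (z - b) / of_real ((cmod (z - b))^2)"
  proof -
    have "of_real ((cmod (z-b))^2) = (z-b)*cnj(z-b)" using complex_norm_square[of "z-b"] by simp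
    then show ?thesis using zb by simp
  qed
  show ?thesis unfolding F Re_divide_of_real using E zb by simp
qed

definition GG :: "real \<Rightarrow> pt set" where
  "GG c = {p. (fst p)^2/2 + fst (snd p) = of_real c \<and> (fst (snd p))^2 + (snd (snd p))^2 = 1}"
definition wz :: "pt \<Rightarrow> complex" where "wz p = fst (snd p) + \<i> * snd (snd p)"
definition wi :: "pt \<Rightarrow> complex" where "wi p = fst (snd p) - \<i> * snd (snd p)"
definition clampr :: "real \<Rightarrow> real \<Rightarrow> real" where "clampr \<rho> r = max (1/\<rho>) (min \<rho> r)"
definition sc :: "real \<Rightarrow> real \<Rightarrow> pt \<Rightarrow> real" where
  "sc \<rho> t p = 1 - t + t * clampr \<rho> (cmod (wz p)) / cmod (wz p)"
definition phi :: "complex \<Rightarrow> real \<Rightarrow> complex \<Rightarrow> complex" where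
  "phi b \<sigma> z = csqrt ((of_real \<sigma> * z - b)/(z - b)) * csqrt ((of_real \<sigma> * z - cnj b)/(z - cnj b))
     / of_real (sqrt \<sigma>)"
definition newpt :: "complex \<Rightarrow> real \<Rightarrow> pt \<Rightarrow> pt" where
  "newpt f s p = (fst p * f, (of_real s * wz p + wi p / of_real s)/2, (of_real s * wz p - wi p / of_real s)/(2*\<i>))"
definition HH :: "complex \<Rightarrow> real \<Rightarrow> real \<times> pt \<Rightarrow> pt" where
  "HH b \<rho> x =
    (if \<rho> \<le> cmod (wz (snd x)) then newpt (phi b (sc \<rho> (fst x) (snd x)) (wz (snd x))) (sc \<rho> (fst x) (snd x)) (snd x)
     else if cmod (wz (snd x)) \<le> 1/\<rho> then newpt (phi b (1 / sc \<rho> (fst x) (snd x)) (wi (snd x))) (sc \<rho> (fst x) (snd x)) (snd x)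
     else snd x)"

lemma n_sq: "(fst (snd q))^2 + (snd (snd q))^2 = wz q * wi q"
  by (simp add: wz_def wi_def algebra_simps power2_eq_square)

lemma n1_eq: "fst (snd q) = (wz q + wi q)/2"
  by (simp add: wz_def wi_def)

lemma n3_eq: "snd (snd q) = (wz q - wi q)/(2*\<i>)"
  by (simp add: wz_def wi_def field_simps)

lemma GG_w: "p \<in> GG c \<Longrightarrow> wz p * wi p = 1"
  using n_sq[of p] by (simp add: GG_def)

lemma GG_wz0: assumes "p \<in> GG c" shows "wz p \<noteq> 0"
  using GG_w[OF assms] by (metis mult_zero_left zero_neq_one)

lemma half_aux: "X = 2*C - Y \<Longrightarrow> X/2 + Y/2 = (C::complex)"
  by (simp add: field_simps)

lemma half_aux2: "X/2 + Y = (C::complex) \<Longrightarrow> X = 2*C - 2*Y"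
  by (simp add: field_simps)

lemma GG_wi: "p \<in> GG c \<Longrightarrow> wi p = 1 / wz p"
  using GG_w[of p c] GG_wz0[of p c] by (simp add: field_simps)

lemma GG_m: assumes "p \<in> GG c" shows "(fst p)^2 = 2 * of_real c - wz p - wi p"
proof -
  have "(fst p)^2 = 2 * of_real c - 2 * fst (snd p)" using assms by (intro half_aux2) (simp add: GG_def)
  moreover have "2 * fst (snd p) = wz p + wi p" by (simp add: wz_def wi_def)
  ultimately show ?thesis by simp
qed

lemma wz_newpt: "wz (newpt f s p) = of_real s * wz p"
  by (simp add: wz_def newpt_def field_simps)

lemma wi_newpt: "s \<noteq> 0 \<Longrightarrow> wi (newpt f s p) = wi p / of_real s"
  by (simp add: wi_def newpt_def field_simps)

lemma newpt_in:
  assumes "p \<in> GG c" "s \<noteq> 0" "(fst p * f)^2 = 2 * of_real c - of_real s * wz p - wi p / of_real s"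
  shows "newpt f s p \<in> GG c"
proof -
  have "(fst (snd (newpt f s p)))^2 + (snd (snd (newpt f s p)))^2 = 1"
    unfolding n_sq wz_newpt wi_newpt[OF assms(2)] using GG_w[OF assms(1)] assms(2) by simp
  moreover have "(fst (newpt f s p))^2/2 + fst (snd (newpt f s p)) = of_real c"
  proof -
    have "fst (snd (newpt f s p)) = (of_real s * wz p + wi p / of_real s)/2" by (simp add: newpt_def)
    moreover have "(fst (newpt f s p))^2 = 2 * of_real c - (of_real s * wz p + wi p / of_real s)"
      using assms(3) by (simp add: newpt_def)
    ultimately show ?thesis by (simp only:) (rule half_aux[OF refl])
  qed
  ultimately show ?thesis by (simp add: GG_def)
qed

lemma newpt_id: "newpt 1 1 p = p"
  using n1_eq[of p] n3_eq[of p] by (cases p) (simp add: newpt_def)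

lemma phi_1: "z \<noteq> b \<Longrightarrow> z \<noteq> cnj b \<Longrightarrow> phi b 1 z = 1"
  by (simp add: phi_def)

lemma phi_sq: "0 < \<sigma> \<Longrightarrow> (phi b \<sigma> z)^2 =
   ((of_real \<sigma> * z - b)/(z - b)) * ((of_real \<sigma> * z - cnj b)/(z - cnj b)) / of_real \<sigma>"
  by (simp add: phi_def power_mult_distrib power_divide of_real_power[symmetric] del: of_real_power)

lemma sc_out:
  assumes "\<rho> \<le> cmod (wz p)" "1 < \<rho>" "0 \<le> t" "t \<le> 1"
  shows "0 < sc \<rho> t p" "sc \<rho> t p \<le> 1" "\<rho> \<le> sc \<rho> t p * cmod (wz p)"
proof -
  define r where "r = cmod (wz p)"
  have r0: "0 < r" using assms r_def by linarith
  have "1/\<rho> \<le> \<rho>" using assms(2) by (simp add: field_simps) (smt (verit) mult_less_cancel_left1)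
  then have cl: "clampr \<rho> r = \<rho>" using assms(1) r_def by (simp add: clampr_def)
  have sr: "sc \<rho> t p * r = (1 - t) * r + t * \<rho>"
    using r0 cl by (simp add: sc_def r_def[symmetric] field_simps)
  have "(1 - t) * \<rho> \<le> (1 - t) * r" using assms r_def by (intro mult_left_mono) auto
  then show 3: "\<rho> \<le> sc \<rho> t p * cmod (wz p)" using sr r_def by (simp add: algebra_simps)
  then show "0 < sc \<rho> t p" using r0 assms(2) r_def by (smt (verit) zero_less_mult_iff)
  have "\<rho> / r \<le> 1" using assms(1) r0 r_def by simp
  then have "t * (\<rho> / r) \<le> t" by (rule mult_left_le[OF _ assms(3)])
  then show "sc \<rho> t p \<le> 1" using cl by (simp add: sc_def r_def[symmetric])
qed

lemma sc_inn:
  assumes "cmod (wz p) \<le> 1/\<rho>" "0 < cmod (wz p)" "1 < \<rho>" "0 \<le> t" "t \<le> 1"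
  shows "1 \<le> sc \<rho> t p" "sc \<rho> t p * cmod (wz p) \<le> 1/\<rho>"
proof -
  define r where "r = cmod (wz p)"
  have r0: "0 < r" using assms r_def by linarith
  have "1/\<rho> \<le> \<rho>" using assms(3) by (simp add: field_simps) (smt (verit) mult_less_cancel_left1)
  then have cl: "clampr \<rho> r = 1/\<rho>" using assms(1) r_def by (simp add: clampr_def)
  have sr: "sc \<rho> t p * r = (1 - t) * r + t * (1/\<rho>)"
    using r0 cl by (simp add: sc_def r_def[symmetric] field_simps)
  have "(1 - t) * r \<le> (1 - t) * (1/\<rho>)" using assms r_def by (intro mult_left_mono) auto
  moreover have "(1-t)*(1/\<rho>) + t*(1/\<rho>) = 1/\<rho>" by (subst distrib_right[symmetric]) simp
  ultimately show "sc \<rho> t p * cmod (wz p) \<le> 1/\<rho>" unfolding r_def[symmetric] using sr by linarith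
  have "1 \<le> (1/\<rho>) / r" using assms(1,3) r0 r_def by (simp add: field_simps)
  then have "t * 1 \<le> t * ((1/\<rho>) / r)" by (rule mult_left_mono[OF _ assms(4)])
  then show "1 \<le> sc \<rho> t p" using cl by (simp add: sc_def r_def[symmetric])
qed

lemma sc_mid: "1/\<rho> \<le> cmod (wz p) \<Longrightarrow> cmod (wz p) \<le> \<rho> \<Longrightarrow> 0 < cmod (wz p) \<Longrightarrow> sc \<rho> t p = 1"
  by (simp add: sc_def clampr_def)

lemma sc_0: "sc \<rho> 0 p = 1"
  by (simp add: sc_def)

lemma sc_1: "0 < cmod (wz p) \<Longrightarrow> sc \<rho> 1 p * cmod (wz p) = clampr \<rho> (cmod (wz p))"
  by (simp add: sc_def)

lemma cmod_wi: "p \<in> GG c \<Longrightarrow> cmod (wi p) = 1 / cmod (wz p)"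
  using GG_wi[of p c] by (simp add: norm_divide)

lemma HH_in:
  assumes hb: "b + cnj b = 2 * of_real c" "b * cnj b = 1" "cmod b = 1"
    and r: "1 < \<rho>" and t: "0 \<le> t" "t \<le> 1" and p: "p \<in> GG c"
  shows "HH b \<rho> (t, p) \<in> GG c"
proof -
  define s where "s = sc \<rho> t p"
  have w0: "0 < cmod (wz p)" using GG_wz0[OF p] by simp
  have m2: "(fst p)^2 = 2 * of_real c - wz p - wi p" using GG_m[OF p] .
  have ww: "wz p * wi p = 1" using GG_w[OF p] .
  have ww': "wi p * wz p = 1" using ww by (simp add: mult.commute)
  show ?thesis
  proof (cases "\<rho> \<le> cmod (wz p)")
    case True
    note so = sc_out[OF True r t, folded s_def]
    have nb: "wz p \<noteq> b" "wz p \<noteq> cnj b" using True r hb(3) by auto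
    have "(fst p * phi b s (wz p))^2 = 2 * of_real c - of_real s * wz p - wi p / of_real s"
      unfolding power_mult_distrib phi_sq[OF so(1)] m2
      using alg1[OF ww, of "of_real s" b c] nb hb so(1) by (simp add: mult.assoc)
    then have "newpt (phi b s (wz p)) s p \<in> GG c" using so(1) by (intro newpt_in[OF p]) auto
    then show ?thesis using True by (simp add: HH_def s_def)
  next
    case False
    show ?thesis
    proof (cases "cmod (wz p) \<le> 1/\<rho>")
      case True
      note si = sc_inn[OF True w0 r t, folded s_def]
      have s0: "0 < s" using si by simp
      have cwi: "cmod (wi p) = 1 / cmod (wz p)" using cmod_wi[OF p] .
      have "\<rho> \<le> cmod (wi p)" using True w0 r unfolding cwi by (simp add: field_simps)
      then have nb: "wi p \<noteq> b" "wi p \<noteq> cnj b" using r hb(3) by auto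
      have "(fst p * phi b (1/s) (wi p))^2 = 2 * of_real c - of_real s * wz p - wi p / of_real s"
      proof -
        define A where "A = (of_real (1/s) * wi p - b)/(wi p - b)"
        define B where "B = (of_real (1/s) * wi p - cnj b)/(wi p - cnj b)"
        have e: "(2 * of_real c - wi p - wz p) * A * B / of_real (1/s)
             = 2 * of_real c - of_real (1/s) * wi p - wz p / of_real (1/s)"
          unfolding A_def B_def using alg1[OF ww', of "of_real (1/s)" b c] nb hb s0 by simp
        have e2: "2 * of_real c - of_real (1/s) * wi p - wz p / of_real (1/s)
             = 2 * of_real c - of_real s * wz p - wi p / of_real s"
          using s0 by (simp add: field_simps)
        have e3: "(2 * of_real c - wz p - wi p) * (A * B / of_real (1/s))
             = (2 * of_real c - wi p - wz p) * A * B / of_real (1/s)"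
          by (simp add: algebra_simps)
        show ?thesis unfolding power_mult_distrib phi_sq[of "1/s", OF divide_pos_pos[OF zero_less_one s0]] m2
          A_def[symmetric] B_def[symmetric] e3 e e2 by simp
      qed
      then have "newpt (phi b (1/s) (wi p)) s p \<in> GG c" using s0 by (intro newpt_in[OF p]) auto
      then show ?thesis using True False by (simp add: HH_def s_def)
    next
      case False2: False
      then show ?thesis using False p by (simp add: HH_def)
    qed
  qed
qed

lemma HH_id:
  assumes "sc \<rho> t p = 1" "1 < \<rho>" "cmod b = 1" "p \<in> GG c"
  shows "HH b \<rho> (t, p) = p"
proof -
  have w0: "0 < cmod (wz p)" using GG_wz0[OF assms(4)] by simp
  have "\<rho> \<le> cmod (wz p) \<Longrightarrow> wz p \<noteq> b \<and> wz p \<noteq> cnj b" using assms(2,3) by auto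
  moreover have "cmod (wz p) \<le> 1/\<rho> \<Longrightarrow> wi p \<noteq> b \<and> wi p \<noteq> cnj b"
  proof -
    assume a: "cmod (wz p) \<le> 1/\<rho>"
    have "\<rho> \<le> cmod (wi p)" using a w0 assms(2) unfolding cmod_wi[OF assms(4)] by (simp add: field_simps)
    then show ?thesis using assms(2,3) by auto
  qed
  ultimately show ?thesis using assms(1) by (auto simp: HH_def phi_1 newpt_id)
qed

lemma HH_0: "1 < \<rho> \<Longrightarrow> cmod b = 1 \<Longrightarrow> p \<in> GG c \<Longrightarrow> HH b \<rho> (0, p) = p"
  using HH_id sc_0 by blast

lemma HH_mid: "1/\<rho> < cmod (wz p) \<Longrightarrow> cmod (wz p) < \<rho> \<Longrightarrow> HH b \<rho> (t, p) = p"
  by (simp add: HH_def)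

lemma HH_1:
  assumes "1 < \<rho>" "p \<in> GG c"
  shows "cmod (wz (HH b \<rho> (1, p))) = clampr \<rho> (cmod (wz p))"
proof -
  have w0: "0 < cmod (wz p)" using GG_wz0[OF assms(2)] by simp
  have s1: "sc \<rho> 1 p * cmod (wz p) = clampr \<rho> (cmod (wz p))" using sc_1[OF w0] .
  have "1/\<rho> \<le> \<rho>" using assms(1) by (simp add: field_simps) (smt (verit) mult_less_cancel_left1)
  then have s0: "0 < sc \<rho> 1 p" using s1 w0 assms(1) unfolding clampr_def
    by (smt (verit) divide_pos_pos zero_less_mult_iff)
  show ?thesis
    using s1 s0 w0 by (auto simp: HH_def wz_newpt norm_mult clampr_def)
qed

lemma clampr_bounds: "1 < \<rho> \<Longrightarrow> 1/\<rho> \<le> clampr \<rho> r \<and> clampr \<rho> r \<le> \<rho>"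
  by (simp add: clampr_def field_simps) (smt (verit) mult_less_cancel_left1)

lemma closed_GG: "closed (GG c)"
  unfolding GG_def by (intro closed_Collect_conj closed_Collect_eq continuous_intros) auto

lemma cont_csqrt:
  assumes "continuous_on S f" "\<And>x. x \<in> S \<Longrightarrow> 0 < Re (f x)"
  shows "continuous_on S (\<lambda>x. csqrt (f x))"
proof (rule continuous_on_compose2[OF continuous_on_csqrt assms(1)])
  show "f ` S \<subseteq> - \<real>\<^sub>\<le>\<^sub>0" using assms(2) by (force simp: complex_nonpos_Reals_iff)
qed

lemma cont_newpt:
  assumes "continuous_on S F" "continuous_on S Sc" "continuous_on S P" "\<And>x. x \<in> S \<Longrightarrow> Sc x \<noteq> 0"
  shows "continuous_on S (\<lambda>x. newpt (F x) (Sc x) (P x))"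
  unfolding newpt_def wz_def wi_def using assms
  by (intro continuous_intros) auto

lemma cont_sc:
  assumes "continuous_on S T" "continuous_on S P" "\<And>x. x \<in> S \<Longrightarrow> wz (P x) \<noteq> 0"
  shows "continuous_on S (\<lambda>x. sc \<rho> (T x) (P x))"
proof -
  have cw: "continuous_on S (\<lambda>x. wz (P x))" unfolding wz_def using assms(2) by (intro continuous_intros)
  show ?thesis unfolding sc_def clampr_def using assms(1,3) cw
    by (intro continuous_intros) auto
qed

lemma cont_phi:
  assumes "continuous_on S Sg" "continuous_on S Z" "cmod b = 1"
    and "\<And>x. x \<in> S \<Longrightarrow> 0 < Sg x \<and> Sg x \<le> 1 \<and> 1 < Sg x * cmod (Z x)"
  shows "continuous_on S (\<lambda>x. phi b (Sg x) (Z x))"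
proof -
  have nz: "Z x \<noteq> b" "Z x \<noteq> cnj b" if "x \<in> S" for x
  proof -
    have "Sg x * cmod (Z x) \<le> cmod (Z x)" using assms(4)[OF that] by (simp add: mult_left_le_one_le)
    then show "Z x \<noteq> b" "Z x \<noteq> cnj b" using assms(3) assms(4)[OF that] by auto
  qed
  have c1: "continuous_on S (\<lambda>x. csqrt ((of_real (Sg x) * Z x - b)/(Z x - b)))"
    apply (rule cont_csqrt)
    using assms nz by (auto intro!: continuous_intros re_pos)
  have c2: "continuous_on S (\<lambda>x. csqrt ((of_real (Sg x) * Z x - cnj b)/(Z x - cnj b)))"
    apply (rule cont_csqrt)
    using assms nz by (auto intro!: continuous_intros re_pos)
  show ?thesis unfolding phi_def using assms c1 c2
    by (intro continuous_intros) (auto, metis less_irrefl)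
qed

lemma HH_cont:
  assumes r: "1 < \<rho>" and hb: "cmod b = 1"
  shows "continuous_on ({0..1} \<times> GG c) (HH b \<rho>)"
proof -
  define D where "D = ({0..1::real} \<times> GG c)"
  define Do where "Do = D \<inter> {x. \<rho> \<le> cmod (wz (snd x))}"
  define Dm where "Dm = D \<inter> {x. 1/\<rho> \<le> cmod (wz (snd x)) \<and> cmod (wz (snd x)) \<le> \<rho>}"
  define Di where "Di = D \<inter> {x. cmod (wz (snd x)) \<le> 1/\<rho>}"
  have cD: "closed D" unfolding D_def by (intro closed_Times closed_atLeastAtMost closed_GG)
  have cwz: "continuous_on UNIV (\<lambda>x::real\<times>pt. cmod (wz (snd x)))"
    unfolding wz_def by (intro continuous_intros)
  have cDo: "closed Do" unfolding Do_def
    by (intro closed_Int cD closed_Collect_le continuous_on_const cwz)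
  have cDm: "closed Dm" unfolding Dm_def
    by (intro closed_Int cD closed_Collect_conj closed_Collect_le continuous_on_const cwz)
  have cDi: "closed Di" unfolding Di_def
    by (intro closed_Int cD closed_Collect_le continuous_on_const cwz)
  have inD: "snd x \<in> GG c" "0 \<le> fst x" "fst x \<le> 1" if "x \<in> D" for x
    using that by (auto simp: D_def)
  have wz0: "wz (snd x) \<noteq> 0" if "x \<in> D" for x using GG_wz0 inD(1)[OF that] by blast
  have contS: "continuous_on D (\<lambda>x. sc \<rho> (fst x) (snd x))"
    by (rule cont_sc) (intro continuous_intros, intro continuous_intros, rule wz0)
  have rr: "1/\<rho> < \<rho>" using r by (simp add: field_simps) (smt (verit) mult_less_cancel_left1)
  have co: "continuous_on Do (\<lambda>x. newpt (phi b (sc \<rho> (fst x) (snd x)) (wz (snd x))) (sc \<rho> (fst x) (snd x)) (snd x))"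
  proof (rule cont_newpt)
    have so: "0 < sc \<rho> (fst x) (snd x) \<and> sc \<rho> (fst x) (snd x) \<le> 1 \<and> 1 < sc \<rho> (fst x) (snd x) * cmod (wz (snd x))"
      if "x \<in> Do" for x
      using sc_out[of \<rho> "snd x" "fst x"] that r inD[of x] by (auto simp: Do_def)
    show "continuous_on Do (\<lambda>x. sc \<rho> (fst x) (snd x))"
      using continuous_on_subset[OF contS] by (auto simp: Do_def)
    then show "continuous_on Do (\<lambda>x. phi b (sc \<rho> (fst x) (snd x)) (wz (snd x)))"
      using so hb by (intro cont_phi) (auto simp: wz_def intro!: continuous_intros)
    show "continuous_on Do snd" by (intro continuous_intros)
    show "\<And>x. x \<in> Do \<Longrightarrow> sc \<rho> (fst x) (snd x) \<noteq> 0" using so by force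
  qed
  have ci: "continuous_on Di (\<lambda>x. newpt (phi b (1 / sc \<rho> (fst x) (snd x)) (wi (snd x))) (sc \<rho> (fst x) (snd x)) (snd x))"
  proof (rule cont_newpt)
    have so: "0 < 1 / sc \<rho> (fst x) (snd x) \<and> 1 / sc \<rho> (fst x) (snd x) \<le> 1 \<and> 1 < 1 / sc \<rho> (fst x) (snd x) * cmod (wi (snd x))"
      if "x \<in> Di" for x
    proof -
      have xD: "x \<in> D" and le: "cmod (wz (snd x)) \<le> 1/\<rho>" using that by (auto simp: Di_def)
      have w0: "0 < cmod (wz (snd x))" using wz0[OF xD] by simp
      note si = sc_inn[OF le w0 r inD(2,3)[OF xD]]
      have cwi: "cmod (wi (snd x)) = 1 / cmod (wz (snd x))" using cmod_wi[OF inD(1)[OF xD]] .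
      have "\<rho> \<le> 1 / (sc \<rho> (fst x) (snd x) * cmod (wz (snd x)))"
        using si(2) w0 r si(1) by (simp add: field_simps)
      then show ?thesis using si(1) r unfolding cwi by (simp add: field_simps)
    qed
    have "continuous_on Di (\<lambda>x. sc \<rho> (fst x) (snd x))"
      using continuous_on_subset[OF contS] by (auto simp: Di_def)
    moreover have "\<And>x. x \<in> Di \<Longrightarrow> sc \<rho> (fst x) (snd x) \<noteq> 0" using so by force
    ultimately show "continuous_on Di (\<lambda>x. sc \<rho> (fst x) (snd x))"
      "\<And>x. x \<in> Di \<Longrightarrow> sc \<rho> (fst x) (snd x) \<noteq> 0" by auto
    then have cinv: "continuous_on Di (\<lambda>x. 1 / sc \<rho> (fst x) (snd x))"
      by (intro continuous_intros) auto
    show "continuous_on Di (\<lambda>x. phi b (1 / sc \<rho> (fst x) (snd x)) (wi (snd x)))"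
    proof (rule cont_phi[OF cinv _ hb])
      show "continuous_on Di (\<lambda>x. wi (snd x))" unfolding wi_def by (intro continuous_intros)
    qed (rule so)
    show "continuous_on Di snd" by (intro continuous_intros)
  qed
  have c1: "continuous_on Do (HH b \<rho>)"
    by (rule continuous_on_eq[OF co]) (auto simp: HH_def Do_def)
  have c3: "continuous_on Di (HH b \<rho>)"
    by (rule continuous_on_eq[OF ci]) (use rr in \<open>auto simp: HH_def Di_def\<close>)
  have c2: "continuous_on Dm (HH b \<rho>)"
  proof (rule continuous_on_eq[of Dm snd])
    show "continuous_on Dm snd" by (intro continuous_intros)
    fix x assume x: "x \<in> Dm"
    then have xD: "x \<in> D" by (auto simp: Dm_def)
    have "sc \<rho> (fst x) (snd x) = 1"
      using x wz0[OF xD] by (intro sc_mid) (auto simp: Dm_def)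
    then have "HH b \<rho> (fst x, snd x) = snd x" using HH_id r hb inD(1)[OF xD] by blast
    then show "snd x = HH b \<rho> x" by simp
  qed
  have "D = Do \<union> Dm \<union> Di" unfolding Do_def Dm_def Di_def by auto
  then have "continuous_on D (HH b \<rho>)"
    using continuous_on_closed_Un[OF closed_Un[OF cDo cDm] cDi continuous_on_closed_Un[OF cDo cDm c1 c2] c3]
    by simp
  then show ?thesis by (simp add: D_def)
qed

lemma O010: "(0, 1, 0) \<in> Omega"
  unfolding Omega_def closure_approachable
proof (intro allI impI)
  fix e :: real assume e: "0 < e"
  define \<mu> where "\<mu> = min (e/4) 1"
  have mu: "0 < \<mu>" "\<mu> \<le> 1" "\<mu> \<le> e/4" using e by (auto simp: \<mu>_def)
  define s where "s = sqrt (1 - \<mu>^2/4)"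
  have mu2: "\<mu>^2 \<le> 1" by (rule power_le_one) (use mu in auto)
  then have s2: "s^2 = 1 - \<mu>^2/4" unfolding s_def by simp
  have s1: "0 \<le> s" "s \<le> 1" unfolding s_def using mu \<open>\<mu>^2 \<le> 1\<close> by auto
  define y :: pt where "y = (of_real \<mu>, of_real (1 - \<mu>^2/2), of_real (\<mu> * s))"
  have r1: "(1 - \<mu>^2/2)^2 + (\<mu> * s)^2 = 1"
    unfolding power_mult_distrib s2 by (simp add: field_simps power2_eq_square)
  have "(of_real (1 - \<mu>^2/2) :: complex)^2 + (of_real (\<mu> * s))^2 = 1"
    using arg_cong[OF r1, of "of_real :: real \<Rightarrow> complex"] by simp
  then have yG: "y \<in> Gamma 1" using mu(1) by (simp add: y_def Gamma_def)
  have yr: "real_pt y" by (simp add: y_def real_pt_def)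
  have "dist y (0,1,0) = norm ((of_real \<mu> :: complex), ((of_real (-(\<mu>^2/2)) :: complex), (of_real (\<mu> * s) :: complex)))"
    by (simp add: y_def dist_norm)
  also have "\<dots> \<le> \<mu> + (\<mu>^2/2 + \<mu> * s)"
    using norm_Pair_le[of "of_real \<mu> :: complex" "((of_real (-(\<mu>^2/2)) :: complex), (of_real (\<mu> * s) :: complex))"]
      norm_Pair_le[of "of_real (-(\<mu>^2/2)) :: complex" "of_real (\<mu> * s) :: complex"] mu s1
    by (simp add: abs_mult norm_mult norm_power)
  also have "\<dots> < e"
  proof -
    have "\<mu>^2 \<le> \<mu>" using mu by (simp add: power2_eq_square mult_left_le_one_le)
    moreover have "\<mu> * s \<le> \<mu>" using mu s1 by (simp add: mult_left_le)
    ultimately show ?thesis using mu e by linarith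
  qed
  finally show "\<exists>y\<in>{p \<in> Gamma 1. real_pt p}. dist y (0, 1, 0) < e" using yG yr by blast
qed

lemma qOm:
  assumes "mq^2 = of_real (2 - 2*a)" "a^2 + bb^2 = 1" "Im mq = 0"
  shows "(mq, of_real a, of_real bb) \<in> Omega"
proof (cases "(mq, of_real a, of_real bb) = ((0,1,0) :: pt)")
  case True then show ?thesis using O010 by simp
next
  case False
  have "(of_real a :: complex)^2 + (of_real bb)^2 = 1"
    using arg_cong[OF assms(2), of "of_real :: real \<Rightarrow> complex"] by simp
  moreover have "mq^2/2 + of_real a = 1" unfolding assms(1) by (simp add: field_simps)
  ultimately have "(mq, of_real a, of_real bb) \<in> {p \<in> Gamma 1. real_pt p}"
    using False assms(3) by (simp add: Gamma_def real_pt_def)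
  then show ?thesis unfolding Omega_def using closure_subset[of "{p \<in> Gamma 1. real_pt p}"] by (rule subsetD[rotated])
qed

lemma Omega_compact: "compact Omega"
proof -
  have "bounded {p \<in> Gamma 1. real_pt p}"
    unfolding bounded_iff
  proof (intro exI ballI)
    fix p assume "p \<in> {p \<in> Gamma 1. real_pt p}"
    then obtain m n1 n3 where pe: "p = (m, n1, n3)" and G: "m^2/2 + n1 = 1" "n1^2 + n3^2 = 1"
      and im: "Im m = 0" "Im n1 = 0" "Im n3 = 0"
      by (cases p) (auto simp: Gamma_def real_pt_def)
    have e1: "(Re m)^2/2 + Re n1 = 1" using arg_cong[OF G(1), of Re] im by (simp add: power2_eq_square)
    have e2: "(Re n1)^2 + (Re n3)^2 = 1" using arg_cong[OF G(2), of Re] im by (simp add: power2_eq_square)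
    have "(Re n1)^2 \<le> 1" "(Re n3)^2 \<le> 1"
      using e2 zero_le_power2[of "Re n3"] zero_le_power2[of "Re n1"] by linarith+
    then have a1: "\<bar>Re n1\<bar> \<le> 1" "\<bar>Re n3\<bar> \<le> 1"
      using abs_le_square_iff[of "Re n1" 1] abs_le_square_iff[of "Re n3" 1] by simp_all
    then have "(Re m)^2 \<le> 2^2" using e1 by (simp add: field_simps)
    then have a2: "\<bar>Re m\<bar> \<le> 2" using abs_le_square_iff[of "Re m" 2] by auto
    have "cmod m = \<bar>Re m\<bar>" "cmod n1 = \<bar>Re n1\<bar>" "cmod n3 = \<bar>Re n3\<bar>" using im by (simp_all add: cmod_def)
    then have "norm p \<le> \<bar>Re m\<bar> + (\<bar>Re n1\<bar> + \<bar>Re n3\<bar>)"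
      using norm_Pair_le[of m "(n1, n3)"] norm_Pair_le[of n1 n3] pe by simp
    then show "norm p \<le> 4" using a1 a2 by linarith
  qed
  then show ?thesis unfolding Omega_def by simp
qed

lemma near1:
  fixes \<rho> x :: real
  assumes "1 < \<rho>" "1/\<rho> \<le> x" "x \<le> \<rho>"
  shows "\<bar>x - 1\<bar> \<le> \<rho> - 1"
proof -
  have "0 \<le> (\<rho> - 1)^2" by simp
  then have "1 - 1/\<rho> \<le> \<rho> - 1" using assms(1) by (simp add: field_simps power2_eq_square algebra_simps)
  then show ?thesis using assms by (cases "1 \<le> x") auto
qed

lemma close:
  assumes p: "p \<in> GG c" and r: "1 < \<rho>" and lo: "1/\<rho> \<le> cmod (wz p)" and hi: "cmod (wz p) \<le> \<rho>"
    and c1: "c \<le> 1"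
  shows "\<exists>q\<in>Omega. dist q p \<le> sqrt (2*(1-c) + 2*(\<rho>-1)) + 2*(\<rho>-1)"
proof -
  obtain m n1 n3 where pe: "p = (m, n1, n3)" by (cases p)
  define w where "w = wz p"
  define R where "R = cmod w"
  have R0: "0 < R" using GG_wz0[OF p] by (simp add: R_def w_def)
  define e where "e = w / of_real R"
  have e1: "cmod e = 1" using R0 by (simp add: e_def norm_divide R_def)
  have e0: "e \<noteq> 0" using e1 by auto
  have we: "w = of_real R * e" using R0 by (simp add: e_def)
  have "e * cnj e = 1" using complex_norm_square[of e] e1 by simp
  then have ecnj: "cnj e = 1 / e" using e0 by (simp add: field_simps)
  have wip: "wi p = 1 / w" using GG_wi[OF p] by (simp add: w_def)
  have d1: "cmod (w - e) \<le> \<rho> - 1"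
  proof -
    have "w - e = of_real (R - 1) * e" using we by (simp add: algebra_simps)
    then have "cmod (w - e) = cmod (of_real (R - 1) * e)" by (simp only:)
    also have "\<dots> = \<bar>R - 1\<bar>" using e1 by (simp only: norm_mult norm_of_real) simp
    finally have "cmod (w - e) = \<bar>R - 1\<bar>" .
    then show ?thesis using near1[OF r] lo hi by (simp add: R_def w_def)
  qed
  have d2: "cmod (wi p - cnj e) \<le> \<rho> - 1"
  proof -
    have "wi p - cnj e = of_real (1/R - 1) * (1/e)" using we wip ecnj R0 e0 by (simp add: field_simps)
    then have "cmod (wi p - cnj e) = cmod (of_real (1/R - 1) * (1/e))" by (simp only:)
    also have "\<dots> = \<bar>1/R - 1\<bar>" using e1 by (simp only: norm_mult norm_of_real norm_divide norm_one) simp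
    finally have "cmod (wi p - cnj e) = \<bar>1/R - 1\<bar>" .
    moreover have "1/\<rho> \<le> 1/R" "1/R \<le> \<rho>" using lo hi R0 r by (auto simp: R_def w_def field_simps)
    ultimately show ?thesis using near1[OF r] by simp
  qed
  define a where "a = Re e"
  define bb where "bb = Im e"
  have ha: "of_real a = (e + cnj e)/2" using complex_add_cnj[of e] by (simp add: a_def)
  have hb: "of_real bb = (e - cnj e)/(2*\<i>)" using complex_diff_cnj[of e] by (simp add: bb_def field_simps)
  have ab1: "a^2 + bb^2 = 1" using e1 unfolding a_def bb_def cmod_power2[symmetric] by simp
  have a1: "a \<le> 1" using complex_Re_le_cmod[of e] e1 by (simp add: a_def)
  have n1e: "n1 = (w + wi p)/2" using n1_eq[of p] pe w_def by simp
  have n3e: "n3 = (w - wi p)/(2*\<i>)" using n3_eq[of p] pe w_def by simp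
  have dn1: "cmod (n1 - of_real a) \<le> \<rho> - 1"
  proof -
    have "n1 - of_real a = ((w - e) + (wi p - cnj e))/2" unfolding n1e ha by (simp add: field_simps)
    then have "cmod (n1 - of_real a) = cmod (((w - e) + (wi p - cnj e))/2)" by (simp only:)
    also have "\<dots> = cmod ((w - e) + (wi p - cnj e))/2" by (simp only: norm_divide) simp
    also have "\<dots> \<le> (cmod (w - e) + cmod (wi p - cnj e))/2" using norm_triangle_ineq by (simp add: divide_right_mono)
    also have "\<dots> \<le> ((\<rho> - 1) + (\<rho> - 1))/2" by (rule divide_right_mono[OF add_mono[OF d1 d2]]) simp
    also have "\<dots> = \<rho> - 1" by simp
    finally show ?thesis .
  qed
  have dn3: "cmod (n3 - of_real bb) \<le> \<rho> - 1"
  proof -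
    have "n3 - of_real bb = ((w - e) - (wi p - cnj e))/(2*\<i>)" unfolding n3e hb by (simp add: field_simps)
    then have "cmod (n3 - of_real bb) = cmod (((w - e) - (wi p - cnj e))/(2*\<i>))" by (simp only:)
    also have "\<dots> = cmod ((w - e) - (wi p - cnj e))/2" by (simp only: norm_divide norm_mult) simp
    also have "\<dots> \<le> (cmod (w - e) + cmod (wi p - cnj e))/2" using norm_triangle_ineq4 by (simp add: divide_right_mono)
    also have "\<dots> \<le> ((\<rho> - 1) + (\<rho> - 1))/2" by (rule divide_right_mono[OF add_mono[OF d1 d2]]) simp
    also have "\<dots> = \<rho> - 1" by simp
    finally show ?thesis .
  qed
  have m2: "m^2 = 2 * of_real c - 2 * n1"
  proof -
    have fm: "fst p = m" using pe by simp
    have "m^2 = 2 * of_real c - wz p - wi p" using GG_m[OF p] unfolding fm .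
    moreover have "2 * n1 = wz p + wi p" using n1e unfolding w_def by (simp add: mult.commute)
    ultimately show ?thesis by (simp add: algebra_simps)
  qed
  define sq where "sq = complex_of_real (sqrt (2 - 2*a))"
  have sq2: "sq^2 = of_real (2 - 2*a)" using a1 by (simp add: sq_def flip: of_real_power)
  define mq where "mq = (if cmod (m - sq) \<le> cmod (m + sq) then sq else -sq)"
  have mq2: "mq^2 = of_real (2 - 2*a)" using sq2 by (simp add: mq_def)
  have mqi: "Im mq = 0" by (simp add: mq_def sq_def)
  have mle: "cmod (m - mq) \<le> cmod (m + mq)" by (simp add: mq_def)
  have "cmod (m - mq)^2 \<le> cmod (m - mq) * cmod (m + mq)"
    unfolding power2_eq_square using mle by (simp add: mult_left_mono)
  also have "\<dots> = cmod (m^2 - mq^2)"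
  proof -
    have "m^2 - mq^2 = (m - mq)*(m + mq)" by (simp add: algebra_simps power2_eq_square)
    then show ?thesis by (simp only: norm_mult)
  qed
  also have "m^2 - mq^2 = 2 * of_real (c - 1) - 2 * (n1 - of_real a)" unfolding m2 mq2 by (simp add: algebra_simps)
  also have "cmod \<dots> \<le> 2 * (1 - c) + 2 * (\<rho> - 1)"
  proof -
    have "cmod (2 * of_real (c - 1) - 2 * (n1 - of_real a)) \<le> cmod (2 * of_real (c - 1) :: complex) + cmod (2 * (n1 - of_real a))"
      by (rule norm_triangle_ineq4)
    also have "\<dots> = 2 * (1 - c) + 2 * cmod (n1 - of_real a)" by (simp only: norm_mult norm_of_real) (use c1 in simp)
    finally have X: "cmod (2 * of_real (c - 1) - 2 * (n1 - of_real a)) \<le> 2 * (1 - c) + 2 * cmod (n1 - of_real a)" .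
    have h2: "2 * cmod (n1 - of_real a) \<le> 2 * (\<rho> - 1)" using dn1 by simp
    show ?thesis using X add_left_mono[OF h2, of "2*(1-c)"] by (rule order_trans)
  qed
  finally have dm: "cmod (m - mq) \<le> sqrt (2 * (1 - c) + 2 * (\<rho> - 1))" by (rule real_le_rsqrt)
  define q :: pt where "q = (mq, of_real a, of_real bb)"
  have qO: "q \<in> Omega" unfolding q_def by (rule qOm[OF mq2 ab1 mqi])
  have "dist q p = norm (mq - m, of_real a - n1, of_real bb - n3)" by (simp add: q_def pe dist_norm)
  also have "\<dots> \<le> cmod (mq - m) + (cmod (of_real a - n1) + cmod (of_real bb - n3))"
    using norm_Pair_le[of "mq - m" "(of_real a - n1, of_real bb - n3)"] norm_Pair_le[of "of_real a - n1" "of_real bb - n3"]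
    by simp
  also have "\<dots> \<le> sqrt (2*(1-c) + 2*(\<rho>-1)) + 2*(\<rho>-1)"
    using dm dn1 dn3 by (simp add: norm_minus_commute)
  finally show ?thesis using qO by (intro bexI[of _ q])
qed

lemma Gamma_GG: "k \<noteq> 1 \<Longrightarrow> Gamma k = GG (2 * k^2 - 1)"
  by (auto simp: Gamma_def GG_def)

lemma GG_NN: "GG c \<subseteq> NN"
  by (auto simp: GG_def NN_def)

theorem lemma5:
  fixes U :: "pt set"
  assumes "openin (top_of_set NN) U" and "Omega \<subseteq> U"
  shows "\<exists>\<epsilon>>0. \<forall>k::real. 0 < k \<and> 0 < 1 - k \<and> 1 - k < \<epsilon> \<longrightarrow> pi1_generated_in (Gamma k) U"
proof -
  obtain V where V: "open V" "U = NN \<inter> V" using assms(1) by (auto simp: openin_open)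
  have OV: "Omega \<subseteq> V" using assms(2) V by auto
  obtain \<eta> where eta: "0 < \<eta>" "\<And>x. x \<in> Omega \<Longrightarrow> \<exists>G\<in>{V}. ball x \<eta> \<subseteq> G"
    using Heine_Borel_lemma[OF Omega_compact, of "{V}"] OV V(1) by auto
  define \<eta>1 where "\<eta>1 = min \<eta> 1"
  have eta1: "0 < \<eta>1" "\<eta>1 \<le> 1" "\<eta>1 \<le> \<eta>" using eta(1) by (auto simp: \<eta>1_def)
  define d where "d = \<eta>1^2/64"
  have d0: "0 < d" using eta1 by (simp add: d_def)
  define \<rho> where "\<rho> = 1 + d"
  have r: "1 < \<rho>" using d0 by (simp add: \<rho>_def)
  show ?thesis
  proof (intro exI[of _ d] conjI allI impI d0)
    fix k :: real assume k: "0 < k \<and> 0 < 1 - k \<and> 1 - k < d"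
    define c where "c = 2 * k^2 - 1"
    have G: "Gamma k = GG c" using k Gamma_GG[of k] by (simp add: c_def)
    have k1: "k < 1" "0 < k" using k by auto
    have "k^2 < 1^2" by (rule power_strict_mono) (use k1 in auto)
    then have k2: "k^2 < 1" by simp
    have cc: "-1 < c" "c < 1" using k1 k2 by (auto simp: c_def)
    have "1 - c = 2 * ((1 - k) * (1 + k))" by (simp add: c_def algebra_simps power2_eq_square)
    moreover have "(1-k)*(1+k) \<le> 2 - 2*k"
    proof -
      have "(1-k)*(1+k) \<le> (1-k)*2" by (intro mult_left_mono) (use k1 in auto)
      then show ?thesis by (simp add: algebra_simps)
    qed
    moreover have kd: "1 - k < d" using k by simp
    ultimately have c4: "1 - c < 4 * d" by linarith
    define b where "b = Complex c (sqrt (1 - c^2))"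
    have "\<bar>c\<bar> \<le> 1" using cc by (simp add: abs_le_iff)
    then have c2: "c^2 \<le> 1" using abs_le_square_iff[of c 1] by simp
    have hb1: "b + cnj b = 2 * of_real c" by (simp add: b_def complex_eq_iff)
    have hb2: "b * cnj b = 1" using c2 by (simp add: b_def complex_eq_iff power2_eq_square[symmetric])
    have hb3: "cmod b = 1" using c2 by (simp add: b_def cmod_def)
    define r1 where "r1 = (\<lambda>p. HH b \<rho> (1, p))"
    have bound: "sqrt (2*(1-c) + 2*(\<rho>-1)) + 2*(\<rho>-1) < \<eta>1"
    proof -
      have sq4: "(\<eta>1/2)^2 = \<eta>1^2/4" by (simp add: power_divide)
      have A: "2*(1-c) + 2*(\<rho>-1) < (\<eta>1/2)^2" using c4 eta1(1) unfolding sq4 \<rho>_def d_def by (simp add: algebra_simps) (use zero_less_power[OF eta1(1), of 2] in linarith)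
      have B: "sqrt (2*(1-c) + 2*(\<rho>-1)) < \<eta>1/2"
        using real_sqrt_less_mono[OF A] eta1(1) by simp
      have C: "\<eta>1^2 \<le> \<eta>1" using eta1 by (simp add: power2_eq_square mult_left_le_one_le)
      have D: "2*(\<rho>-1) \<le> \<eta>1/2" using C eta1 unfolding \<rho>_def d_def by (simp add: algebra_simps)
      show ?thesis using B D by linarith
    qed
    have r1G: "r1 p \<in> GG c" if "p \<in> GG c" for p
      unfolding r1_def using HH_in[OF hb1 hb2 hb3 r _ _ that] by simp
    have r1U: "r1 p \<in> U" if pG: "p \<in> GG c" for p
    proof -
      have "cmod (wz (r1 p)) = clampr \<rho> (cmod (wz p))" unfolding r1_def using HH_1[OF r pG] .
      then have "1/\<rho> \<le> cmod (wz (r1 p))" "cmod (wz (r1 p)) \<le> \<rho>" using clampr_bounds[OF r] by auto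
      then obtain q where q: "q \<in> Omega" "dist q (r1 p) \<le> sqrt (2*(1-c) + 2*(\<rho>-1)) + 2*(\<rho>-1)"
        using close[OF r1G[OF pG] r] cc by auto
      then have "r1 p \<in> ball q \<eta>" using bound eta1 by (simp add: ball_def)
      then have "r1 p \<in> V" using eta(2)[OF q(1)] by auto
      then show ?thesis using V(2) GG_NN r1G[OF pG] by auto
    qed
    have contH: "continuous_on ({0..1} \<times> GG c) (HH b \<rho>)" by (rule HH_cont[OF r hb3])
    have contr1: "continuous_on (GG c) r1"
      unfolding r1_def
      by (rule continuous_on_compose2[OF contH]) (auto intro!: continuous_intros)
    define x0 :: pt where "x0 = (of_real (2*k), -1, 0)"
    have x0G: "x0 \<in> GG c" by (simp add: x0_def GG_def c_def power2_eq_square)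
    have wx0: "wz x0 = -1" by (simp add: x0_def wz_def)
    have rr: "1/\<rho> < 1" using r by simp
    have Hx0: "HH b \<rho> (t, x0) = x0" for t using HH_mid[of \<rho> x0] rr r wx0 by simp
    have x0U: "x0 \<in> U" using r1U[OF x0G] Hx0 by (simp add: r1_def)
    show "pi1_generated_in (Gamma k) U"
      unfolding pi1_generated_in_def G
    proof (intro bexI[of _ x0] allI impI)
      show "x0 \<in> GG c \<inter> U" using x0G x0U by simp
      fix g :: "real \<Rightarrow> pt"
      assume g: "path g \<and> path_image g \<subseteq> GG c \<and> pathstart g = x0 \<and> pathfinish g = x0"
      have gG: "g x \<in> GG c" if "x \<in> {0..1}" for x using g that by (auto simp: path_image_def)
      have gimg: "g ` {0..1} \<subseteq> GG c" using gG by auto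
      have gc: "continuous_on {0..1} g" using g by (simp add: path_def)
      have pr: "path (r1 \<circ> g)" unfolding path_def
        by (rule continuous_on_compose[OF gc continuous_on_subset[OF contr1 gimg]])
      have pir: "path_image (r1 \<circ> g) \<subseteq> GG c \<inter> U"
      proof
        fix y assume "y \<in> path_image (r1 \<circ> g)"
        then obtain x where x: "x \<in> {0..1}" "y = r1 (g x)" by (auto simp: path_image_def)
        then show "y \<in> GG c \<inter> U" using r1G[OF gG[OF x(1)]] r1U[OF gG[OF x(1)]] by simp
      qed
      have sr: "pathstart (r1 \<circ> g) = x0" "pathfinish (r1 \<circ> g) = x0"
        using g Hx0 by (auto simp: pathstart_def pathfinish_def r1_def)
      have h1: "homotopic_paths (GG c) g (r1 \<circ> g)"
        unfolding homotopic_paths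
      proof (intro exI[of _ "\<lambda>z. HH b \<rho> (fst z, g (snd z))"] conjI)
        show "continuous_on ({0..1} \<times> {0..1}) (\<lambda>z. HH b \<rho> (fst z, g (snd z)))"
        proof (rule continuous_on_compose2[OF contH])
          show "continuous_on ({0..1} \<times> {0..1}) (\<lambda>z::real\<times>real. (fst z, g (snd z)))"
          proof -
            have "continuous_on ({0..1} \<times> {0..1}) (\<lambda>z::real\<times>real. g (snd z))"
              by (rule continuous_on_compose2[OF gc continuous_on_snd]) auto
            then show ?thesis by (intro continuous_on_Pair continuous_on_fst continuous_on_id) assumption
          qed
          show "(\<lambda>z::real\<times>real. (fst z, g (snd z))) ` ({0..1} \<times> {0..1}) \<subseteq> {0..1} \<times> GG c"
            using gG by auto
        qed
        show "(\<lambda>z. HH b \<rho> (fst z, g (snd z))) \<in> {0..1} \<times> {0..1} \<rightarrow> GG c"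
        proof (rule Pi_I)
          fix z :: "real \<times> real" assume z: "z \<in> {0..1} \<times> {0..1}"
          then have z1: "0 \<le> fst z" "fst z \<le> 1" and z2: "snd z \<in> {0..1}" by (auto simp: mem_Times_iff)
          show "HH b \<rho> (fst z, g (snd z)) \<in> GG c" by (rule HH_in[OF hb1 hb2 hb3 r z1 gG[OF z2]])
        qed
        show "\<forall>x\<in>{0..1}. HH b \<rho> (fst (0, x), g (snd (0, x))) = g x"
          using HH_0[OF r hb3 gG] by simp
        show "\<forall>x\<in>{0..1}. HH b \<rho> (fst (1, x), g (snd (1, x))) = (r1 \<circ> g) x"
          by (simp add: r1_def)
        show "\<forall>t\<in>{0..1}. pathstart ((\<lambda>z. HH b \<rho> (fst z, g (snd z))) \<circ> Pair t) = pathstart g \<and>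
              pathfinish ((\<lambda>z. HH b \<rho> (fst z, g (snd z))) \<circ> Pair t) = pathfinish g"
          using g Hx0 by (auto simp: pathstart_def pathfinish_def)
      qed
      have h2: "homotopic_paths (GG c) ((r1 \<circ> g) +++ linepath x0 x0) (r1 \<circ> g)"
        using homotopic_paths_rid'[OF pr _ sr(2)[symmetric]] pir by auto
      show "\<exists>gs. (\<forall>h\<in>set gs. path h \<and> path_image h \<subseteq> GG c \<inter> U \<and> pathstart h = x0 \<and> pathfinish h = x0) \<and>
              homotopic_paths (GG c) g (foldr (+++) gs (linepath x0 x0))"
      proof (intro exI[of _ "[r1 \<circ> g]"] conjI)
        show "\<forall>h\<in>set [r1 \<circ> g]. path h \<and> path_image h \<subseteq> GG c \<inter> U \<and> pathstart h = x0 \<and> pathfinish h = x0"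
          using pr pir sr by simp
        show "homotopic_paths (GG c) g (foldr (+++) [r1 \<circ> g] (linepath x0 x0))"
          using homotopic_paths_trans[OF h1 homotopic_paths_sym[OF h2]] by simp
      qed
    qed
  qed
qed

end
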